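(* Let $Q$ be a function from a recursive subset of $\mathbb{N}^3$ to $\mathbb{N}$ such that $Q(n,k,s)\in B^n$ whenever defined, and let $r>1$. Then there exists a coloring function $c:\mathbb{N}\rightarrow r=\{0,\dots,r-1\}$, uniformly recursive in $Q$, such that for every $w\in\mathbb{Z}^+$ and every $n<\lambda(w)$, if $Q(n,\lambda(w),\mu(w))$ is defined then $c(w+Q(n,\lambda(w),\mu(w)))\equiv c(w)+1\pmod r$.
   Context: For $x=\sum_{i=0}^{k}2^{n_i}\in\mathbb{Z}^+$ with $n_0<\cdots<n_k$, set $\mu(x)=n_k$ and $\lambda(x)=n_0$. For each $n$, $B^n=\{x\in\mathbb{Z}^+:\mu(x)=n\}$. *)

theory Defs
  imports Main "HOL-Library.Nat_Bijection"
begin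

definition bits :: "nat \<Rightarrow> nat set" where
  "bits x = {n. odd (x div 2 ^ n)}"

definition mu :: "nat \<Rightarrow> nat" where
  "mu x = Max (bits x)"

definition lam :: "nat \<Rightarrow> nat" where
  "lam x = Min (bits x)"

definition B :: "nat \<Rightarrow> nat set" where
  "B n = {x. x > 0 \<and> mu x = n}"

datatype rf = Zero | Succ | Proj nat | Comp rf "rf list" | Prim rf rf | Mu rf | Orc

inductive eval :: "(nat \<Rightarrow> nat) \<Rightarrow> rf \<Rightarrow> nat list \<Rightarrow> nat \<Rightarrow> bool" for f where
  ev_zero: "eval f Zero xs 0"
| ev_succ: "eval f Succ (x # xs) (Suc x)"
| ev_proj: "i < length xs \<Longrightarrow> eval f (Proj i) xs (xs ! i)"
| ev_orc: "eval f Orc (x # xs) (f x)"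
| ev_comp: "list_all2 (\<lambda>g y. eval f g xs y) gs ys \<Longrightarrow> eval f h ys z \<Longrightarrow> eval f (Comp h gs) xs z"
| ev_prim0: "eval f g xs z \<Longrightarrow> eval f (Prim g h) (0 # xs) z"
| ev_primS: "eval f (Prim g h) (n # xs) y \<Longrightarrow> eval f h (y # n # xs) z
             \<Longrightarrow> eval f (Prim g h) (Suc n # xs) z"
| ev_mu: "eval f g (n # xs) 0 \<Longrightarrow> (\<forall>m<n. \<exists>y. eval f g (m # xs) y \<and> y > 0)
             \<Longrightarrow> eval f (Mu g) xs n"

definition computes :: "(nat \<Rightarrow> nat) \<Rightarrow> rf \<Rightarrow> (nat \<Rightarrow> nat) \<Rightarrow> bool" where
  "computes f e c \<longleftrightarrow> (\<forall>x. eval f e [x] (c x))"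

definition recursive_set3 :: "(nat \<times> nat \<times> nat) set \<Rightarrow> bool" where
  "recursive_set3 D \<longleftrightarrow> (\<exists>e. \<forall>n k s. eval (\<lambda>_. 0) e [n, k, s] (if (n, k, s) \<in> D then 1 else 0))"

definition oracle_of :: "(nat \<Rightarrow> nat \<Rightarrow> nat \<Rightarrow> nat option) \<Rightarrow> nat \<Rightarrow> nat" where
  "oracle_of Q x = (case prod_decode x of (n, y) \<Rightarrow> (case prod_decode y of (k, s) \<Rightarrow>
      (case Q n k s of None \<Rightarrow> 0 | Some v \<Rightarrow> Suc v)))"

end

theory Submission
  imports Defs
begin

definition PR :: "nat \<Rightarrow> ((nat \<Rightarrow> nat) \<Rightarrow> nat list \<Rightarrow> nat) \<Rightarrow> bool" where
  "PR k F \<longleftrightarrow> (\<exists>e. \<forall>f xs. length xs = k \<longrightarrow> eval f e xs (F f xs))"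

lemma PR_cong:
  assumes "PR k F" "\<And>f xs. length xs = k \<Longrightarrow> F f xs = G f xs"
  shows "PR k G"
  using assms unfolding PR_def by metis

lemma PR_zero: "PR k (\<lambda>f xs. 0)"
  unfolding PR_def by (auto intro: eval.intros)

lemma PR_proj: "i < k \<Longrightarrow> PR k (\<lambda>f xs. xs ! i)"
  unfolding PR_def by (auto intro: eval.intros)

lemma progs_exist:
  assumes "\<forall>G\<in>set Gs. PR k G"
  shows "\<exists>es. \<forall>f xs. length xs = k \<longrightarrow> list_all2 (\<lambda>g y. eval f g xs y) es (map (\<lambda>G. G f xs) Gs)"
  using assms
proof (induction Gs)
  case Nil
  then show ?case by (intro exI[of _ "[]"]) auto
next
  case (Cons G Gs)
  then obtain es where es: "\<forall>f xs. length xs = k \<longrightarrow> list_all2 (\<lambda>g y. eval f g xs y) es (map (\<lambda>G. G f xs) Gs)"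
    by auto
  from Cons.prems obtain e where e: "\<forall>f xs. length xs = k \<longrightarrow> eval f e xs (G f xs)"
    unfolding PR_def by auto
  show ?case using es e by (intro exI[of _ "e # es"]) auto
qed

lemma PR_compL:
  assumes "PR (length Gs) H" "\<forall>G\<in>set Gs. PR k G"
  shows "PR k (\<lambda>f xs. H f (map (\<lambda>G. G f xs) Gs))"
proof -
  obtain es where es: "\<forall>f xs. length xs = k \<longrightarrow> list_all2 (\<lambda>g y. eval f g xs y) es (map (\<lambda>G. G f xs) Gs)"
    using progs_exist[OF assms(2)] by blast
  obtain eh where eh: "\<forall>f ys. length ys = length Gs \<longrightarrow> eval f eh ys (H f ys)"
    using assms(1) unfolding PR_def by blast
  show ?thesis unfolding PR_def
    by (rule exI[of _ "Comp eh es"]) (auto intro!: eval.ev_comp es[rule_format] eh[rule_format])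
qed

lemma PR_comp1:
  assumes "PR 1 H" "PR k A"
  shows "PR k (\<lambda>f xs. H f [A f xs])"
  using PR_compL[of "[A]" H k] assms by simp

lemma PR_comp2:
  assumes "PR 2 H" "PR k A" "PR k B1"
  shows "PR k (\<lambda>f xs. H f [A f xs, B1 f xs])"
  using PR_compL[of "[A, B1]" H k] assms by (simp add: numeral_2_eq_2)

lemma PR_suc: "PR k A \<Longrightarrow> PR k (\<lambda>f xs. Suc (A f xs))"
proof -
  have "PR 1 (\<lambda>f xs. Suc (hd xs))"
    unfolding PR_def by (auto intro!: exI[of _ Succ] simp: length_Suc_conv intro: eval.intros)
  then show "PR k A \<Longrightarrow> PR k (\<lambda>f xs. Suc (A f xs))"
    by (rule PR_cong[OF PR_comp1]) auto
qed

lemma PR_orc: "PR k A \<Longrightarrow> PR k (\<lambda>f xs. f (A f xs))"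
proof -
  have "PR 1 (\<lambda>f xs. f (hd xs))"
    unfolding PR_def by (auto intro!: exI[of _ Orc] simp: length_Suc_conv intro: eval.intros)
  then show "PR k A \<Longrightarrow> PR k (\<lambda>f xs. f (A f xs))"
    by (rule PR_cong[OF PR_comp1]) auto
qed

lemma PR_const: "PR k (\<lambda>f xs. c)"
proof (induction c)
  case 0 then show ?case by (rule PR_zero)
next
  case (Suc c) then show ?case using PR_suc[of k "\<lambda>f xs. c"] by simp
qed

lemma PR_prim:
  assumes "PR k G" "PR (Suc (Suc k)) H"
  shows "PR (Suc k) (\<lambda>f xs. rec_nat (G f (tl xs)) (\<lambda>n acc. H f (acc # n # tl xs)) (hd xs))"
proof -
  obtain eg where eg: "\<forall>f xs. length xs = k \<longrightarrow> eval f eg xs (G f xs)"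
    using assms(1) unfolding PR_def by blast
  obtain eh where eh: "\<forall>f xs. length xs = Suc (Suc k) \<longrightarrow> eval f eh xs (H f xs)"
    using assms(2) unfolding PR_def by blast
  have *: "eval f (Prim eg eh) (n # ys) (rec_nat (G f ys) (\<lambda>n acc. H f (acc # n # ys)) n)"
    if "length ys = k" for f ys n
    using that
  proof (induction n)
    case 0 then show ?case by (auto intro: eval.ev_prim0 eg[rule_format])
  next
    case (Suc n) then show ?case
      by (auto intro!: eval.ev_primS[OF Suc.IH] eh[rule_format])
  qed
  show ?thesis unfolding PR_def
    by (rule exI[of _ "Prim eg eh"]) (auto simp: length_Suc_conv intro: *)
qed

lemma map_nth_len [simp]: "length xs = k \<Longrightarrow> map ((!) xs) [0..<k] = xs"
  using map_nth[of xs] by simp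

lemma map_proj: "length xs = k \<Longrightarrow> map (\<lambda>G. G f xs) (map (\<lambda>i f xs. xs ! i) [0..<k]) = xs"
  by (simp add: map_nth o_def)

lemma PR_projs: "\<forall>G\<in>set (map (\<lambda>i f (xs::nat list). xs ! i) [0..<k]). PR k G"
  by (auto intro: PR_proj)

lemma PR_rec:
  assumes "PR k G" "PR (Suc (Suc k)) (\<lambda>f ys. H f (hd (tl ys)) (hd ys) (tl (tl ys)))" "PR k N"
  shows "PR k (\<lambda>f xs. rec_nat (G f xs) (\<lambda>n acc. H f n acc xs) (N f xs))"
proof -
  have P: "PR (Suc k) (\<lambda>f xs. rec_nat (G f (tl xs)) (\<lambda>n acc. H f n acc (tl xs)) (hd xs))"
    using PR_prim[OF assms(1,2)] by simp
  have "PR k (\<lambda>f xs. (\<lambda>f xs. rec_nat (G f (tl xs)) (\<lambda>n acc. H f n acc (tl xs)) (hd xs)) f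
           (map (\<lambda>G. G f xs) (N # map (\<lambda>i f xs. xs ! i) [0..<k])))"
    by (rule PR_compL) (use P assms(3) PR_projs in auto)
  then show ?thesis
    by (rule PR_cong) (simp add: map_nth o_def)
qed

lemma PR_tl: "PR k F \<Longrightarrow> PR (Suc k) (\<lambda>f xs. F f (tl xs))"
proof -
  assume F: "PR k F"
  have "PR (Suc k) (\<lambda>f xs. F f (map (\<lambda>G. G f xs) (map (\<lambda>i f xs. xs ! Suc i) [0..<k])))"
    by (rule PR_compL) (use F in \<open>auto intro: PR_proj\<close>)
  then show ?thesis
    by (rule PR_cong) (auto simp: o_def intro!: arg_cong[where f="F _"] nth_equalityI
         simp: nth_tl)
qed


named_theorems prI

lemma nth0_hd: "0 < length ys \<Longrightarrow> ys ! 0 = hd ys" by (cases ys) auto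

lemma PR_hd0 [prI]: "0 < k \<Longrightarrow> PR k (\<lambda>f xs. hd xs)"
  by (rule PR_cong[OF PR_proj[of 0]]) (auto intro!: nth0_hd dest!: arg_cong[where f=length])
lemma PR_tl1 [prI]: "Suc j < k \<Longrightarrow> PR k (\<lambda>f xs. tl xs ! j)"
  by (rule PR_cong[OF PR_proj[of "Suc j"]]) (auto simp: nth_tl)
lemma PR_tl2 [prI]: "Suc (Suc j) < k \<Longrightarrow> PR k (\<lambda>f xs. tl (tl xs) ! j)"
  by (rule PR_cong[OF PR_proj[of "Suc (Suc j)"]]) (auto simp: nth_tl)
lemma PR_tl3 [prI]: "Suc (Suc (Suc j)) < k \<Longrightarrow> PR k (\<lambda>f xs. tl (tl (tl xs)) ! j)"
  by (rule PR_cong[OF PR_proj[of "Suc (Suc (Suc j))"]]) (auto simp: nth_tl)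
lemma PR_tl4 [prI]: "Suc (Suc (Suc (Suc j))) < k \<Longrightarrow> PR k (\<lambda>f xs. tl (tl (tl (tl xs))) ! j)"
  by (rule PR_cong[OF PR_proj[of "Suc (Suc (Suc (Suc j)))"]]) (auto simp: nth_tl)

lemma PR_hd1 [prI]: "Suc 0 < k \<Longrightarrow> PR k (\<lambda>f xs. hd (tl xs))"
  by (rule PR_cong[OF PR_tl1[of 0]]) (auto intro!: nth0_hd dest!: arg_cong[where f=length])
lemma PR_hd2 [prI]: "Suc (Suc 0) < k \<Longrightarrow> PR k (\<lambda>f xs. hd (tl (tl xs)))"
  by (rule PR_cong[OF PR_tl2[of 0]]) (auto intro!: nth0_hd dest!: arg_cong[where f=length])
lemma PR_hd3 [prI]: "Suc (Suc (Suc 0)) < k \<Longrightarrow> PR k (\<lambda>f xs. hd (tl (tl (tl xs))))"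
  by (rule PR_cong[OF PR_tl3[of 0]]) (auto intro!: nth0_hd dest!: arg_cong[where f=length])
declare PR_proj [prI] PR_const [prI] PR_suc [prI] PR_orc [prI]

lemma rec_add: "rec_nat a (\<lambda>n acc. Suc acc) b = a + b" by (induct b) auto
lemma rec_pred: "rec_nat 0 (\<lambda>n acc. n) m = m - 1" by (cases m) auto
lemma rec_sub: "rec_nat a (\<lambda>n acc. acc - 1) b = a - b" by (induct b) auto
lemma rec_mult: "rec_nat 0 (\<lambda>n acc. acc + a) b = b * a" by (induct b) auto
lemma rec_pow: "rec_nat 1 (\<lambda>n acc. a * acc) b = a ^ b" by (induct b) simp_all
lemma rec_sum: "rec_nat 0 (\<lambda>n acc. acc + A n) N = (\<Sum>i<N. A i)" by (induct N) auto

lemma PR_add [prI]: "PR k A \<Longrightarrow> PR k B1 \<Longrightarrow> PR k (\<lambda>f xs. A f xs + B1 f xs)"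
proof -
  have "PR 2 (\<lambda>f xs. rec_nat (xs ! 0) (\<lambda>n acc. Suc acc) (xs ! 1))"
    by (rule PR_rec) (intro prI | simp)+
  then have "PR 2 (\<lambda>f xs. xs ! 0 + xs ! 1)" unfolding rec_add .
  moreover assume "PR k A" "PR k B1"
  ultimately show ?thesis by (rule PR_cong[OF PR_comp2]) auto
qed

lemma PR_pred [prI]: "PR k A \<Longrightarrow> PR k (\<lambda>f xs. A f xs - 1)"
proof -
  have "PR 1 (\<lambda>f xs. rec_nat 0 (\<lambda>n acc. n) (xs ! 0))"
    by (rule PR_rec) (intro prI | simp)+
  then have "PR 1 (\<lambda>f xs. xs ! 0 - 1)" unfolding rec_pred .
  moreover assume "PR k A"
  ultimately show ?thesis by (rule PR_cong[OF PR_comp1]) auto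
qed

lemma PR_sub [prI]: "PR k A \<Longrightarrow> PR k B1 \<Longrightarrow> PR k (\<lambda>f xs. A f xs - B1 f xs)"
proof -
  have "PR 2 (\<lambda>f xs. rec_nat (xs ! 0) (\<lambda>n acc. acc - 1) (xs ! 1))"
    by (rule PR_rec) (intro prI | simp)+
  then have "PR 2 (\<lambda>f xs. xs ! 0 - xs ! 1)" unfolding rec_sub .
  moreover assume "PR k A" "PR k B1"
  ultimately show ?thesis by (rule PR_cong[OF PR_comp2]) auto
qed

lemma PR_mult [prI]: "PR k A \<Longrightarrow> PR k B1 \<Longrightarrow> PR k (\<lambda>f xs. A f xs * B1 f xs)"
proof -
  have "PR 2 (\<lambda>f xs. rec_nat 0 (\<lambda>n acc. acc + xs ! 1) (xs ! 0))"
    by (rule PR_rec) (intro prI | simp)+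
  then have "PR 2 (\<lambda>f xs. xs ! 0 * xs ! 1)" unfolding rec_mult .
  moreover assume "PR k A" "PR k B1"
  ultimately show ?thesis by (rule PR_cong[OF PR_comp2]) auto
qed

lemma PR_pow [prI]: "PR k A \<Longrightarrow> PR k B1 \<Longrightarrow> PR k (\<lambda>f xs. A f xs ^ B1 f xs)"
proof -
  have "PR 2 (\<lambda>f xs. rec_nat 1 (\<lambda>n acc. xs ! 0 * acc) (xs ! 1))"
    by (rule PR_rec) (intro prI | simp)+
  then have "PR 2 (\<lambda>f xs. xs ! 0 ^ xs ! 1)" unfolding rec_pow .
  moreover assume "PR k A" "PR k B1"
  ultimately show ?thesis by (rule PR_cong[OF PR_comp2]) auto
qed

lemma PR_sum [prI]:
  assumes "PR (Suc k) (\<lambda>f ys. A f (hd ys) (tl ys))" "PR k N"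
  shows "PR k (\<lambda>f xs. \<Sum>i<N f xs. A f i xs)"
proof -
  have "PR k (\<lambda>f xs. rec_nat 0 (\<lambda>n acc. acc + A f n xs) (N f xs))"
    by (rule PR_rec) (intro prI PR_tl[OF assms(1), simplified] assms(2) | simp)+
  then show ?thesis by (simp add: rec_sum)
qed

definition PRB :: "nat \<Rightarrow> ((nat \<Rightarrow> nat) \<Rightarrow> nat list \<Rightarrow> bool) \<Rightarrow> bool" where
  "PRB k P \<longleftrightarrow> PR k (\<lambda>f xs. if P f xs then 1 else 0)"

lemma PRB_le [prI]: "PR k A \<Longrightarrow> PR k B1 \<Longrightarrow> PRB k (\<lambda>f xs. A f xs \<le> B1 f xs)"
  unfolding PRB_def
  by (rule PR_cong[of k "\<lambda>f xs. 1 - (A f xs - B1 f xs)"]) (intro prI | simp)+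

lemma PRB_not [prI]: "PRB k P \<Longrightarrow> PRB k (\<lambda>f xs. \<not> P f xs)"
  unfolding PRB_def
  by (rule PR_cong[of k "\<lambda>f xs. 1 - (if P f xs then 1 else 0)"]) (intro prI | simp)+

lemma PRB_and [prI]: "PRB k P \<Longrightarrow> PRB k P2 \<Longrightarrow> PRB k (\<lambda>f xs. P f xs \<and> P2 f xs)"
  unfolding PRB_def
  by (rule PR_cong[of k "\<lambda>f xs. (if P f xs then 1 else 0) * (if P2 f xs then 1 else 0)"])
     (intro prI | simp)+

lemma PRB_or [prI]: "PRB k P \<Longrightarrow> PRB k P2 \<Longrightarrow> PRB k (\<lambda>f xs. P f xs \<or> P2 f xs)"
  unfolding PRB_def
  by (rule PR_cong[of k "\<lambda>f xs. 1 - (1 - (if P f xs then 1 else 0)) * (1 - (if P2 f xs then 1 else 0))"])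
     (intro prI | simp)+

lemma PRB_eq [prI]: "PR k A \<Longrightarrow> PR k B1 \<Longrightarrow> PRB k (\<lambda>f xs. A f xs = B1 f xs)"
proof -
  assume "PR k A" "PR k B1"
  then have "PRB k (\<lambda>f xs. A f xs \<le> B1 f xs \<and> B1 f xs \<le> A f xs)"
    by (intro prI)
  then show ?thesis unfolding PRB_def by (rule PR_cong) auto
qed

lemma PRB_less [prI]: "PR k A \<Longrightarrow> PR k B1 \<Longrightarrow> PRB k (\<lambda>f xs. A f xs < B1 f xs)"
proof -
  assume "PR k A" "PR k B1"
  then have "PRB k (\<lambda>f xs. \<not> B1 f xs \<le> A f xs)"
    by (intro prI)
  then show ?thesis unfolding PRB_def by (rule PR_cong) auto
qed

lemma PR_if [prI]: "PRB k P \<Longrightarrow> PR k A \<Longrightarrow> PR k B1 \<Longrightarrow>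
   PR k (\<lambda>f xs. if P f xs then A f xs else B1 f xs)"
  unfolding PRB_def
  by (rule PR_cong[of k "\<lambda>f xs. (if P f xs then 1 else 0) * A f xs + (1 - (if P f xs then 1 else 0)) * B1 f xs"])
     (intro prI | simp)+

lemma sum_count: "(\<Sum>q<a. if q < d then 1 else (0::nat)) = min d a"
  by (induct a) auto

lemma div_as_sum: "(a::nat) div b = (if b = 0 then 0 else \<Sum>q<a. if Suc q * b \<le> a then 1 else 0)"
proof (cases "b = 0")
  case False
  have iff: "Suc q * b \<le> a \<longleftrightarrow> q < a div b" for q
    using less_eq_div_iff_mult_less_eq[of b "Suc q" a] False by (simp only: Suc_le_eq)
  have "(\<Sum>q<a. if Suc q * b \<le> a then 1 else 0) = (\<Sum>q<a. if q < a div b then 1 else (0::nat))"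
    by (rule sum.cong) (simp_all only: iff)
  also have "\<dots> = a div b" by (simp only: sum_count) (simp add: min_def div_le_dividend)
  finally show ?thesis using False by simp
qed simp

lemma PR_div [prI]: "PR k A \<Longrightarrow> PR k B1 \<Longrightarrow> PR k (\<lambda>f xs. A f xs div B1 f xs)"
proof -
  assume a: "PR k A" "PR k B1"
  then have "PR k (\<lambda>f xs. if B1 f xs = 0 then 0 else \<Sum>q<A f xs. if Suc q * B1 f xs \<le> A f xs then 1 else 0)"
    by (intro prI PR_tl[OF a(1)] PR_tl[OF a(2)] | simp)+
  then show ?thesis by (rule PR_cong) (simp add: div_as_sum)
qed

lemma PR_mod [prI]: "PR k A \<Longrightarrow> PR k B1 \<Longrightarrow> PR k (\<lambda>f xs. A f xs mod B1 f xs)"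
proof -
  assume "PR k A" "PR k B1"
  then have "PR k (\<lambda>f xs. A f xs - B1 f xs * (A f xs div B1 f xs))"
    by (intro prI)
  then show ?thesis by (rule PR_cong) (simp add: minus_mult_div_eq_mod)
qed


definition bt :: "nat \<Rightarrow> nat \<Rightarrow> nat" where "bt y m = y div 2 ^ m mod 2"
definition tr :: "nat \<Rightarrow> nat \<Rightarrow> nat" where "tr y m = y div 2 ^ m * 2 ^ m"
definition lkp :: "nat \<Rightarrow> nat \<Rightarrow> nat \<Rightarrow> nat" where "lkp r T z = T div r ^ z mod r"
definition lsb :: "nat \<Rightarrow> nat" where
  "lsb u = (\<Sum>m<u. if u mod 2 ^ Suc m = 0 then 1 else 0)"
definition msb :: "nat \<Rightarrow> nat" where
  "msb u = (\<Sum>m<u. if 2 ^ Suc m \<le> u then 1 else 0)"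
definition pe :: "nat \<Rightarrow> nat \<Rightarrow> nat" where
  "pe a b = (a + b) * Suc (a + b) div 2 + a"
definition qry :: "(nat \<Rightarrow> nat) \<Rightarrow> nat \<Rightarrow> nat" where
  "qry f u = f (pe (lsb u) (pe (lsb (u - 2 ^ lsb u)) (msb u)))"
definition yv :: "(nat \<Rightarrow> nat) \<Rightarrow> nat \<Rightarrow> nat" where
  "yv f u = u - 2 ^ lsb u + (qry f u - 1)"
definition pstepD :: "nat \<Rightarrow> (nat \<Rightarrow> nat) \<Rightarrow> (nat \<Rightarrow> nat) \<Rightarrow> nat \<Rightarrow> nat" where
  "pstepD r f D u = (if u - 2 ^ lsb u = 0 \<or> qry f u = 0 then 0 else
      (r + 1 - (\<Sum>m<lsb u. bt (yv f u) m * D (tr (yv f u) m)) mod r) mod r)"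
definition pstep :: "nat \<Rightarrow> (nat \<Rightarrow> nat) \<Rightarrow> nat \<Rightarrow> nat \<Rightarrow> nat" where
  "pstep r f T u = pstepD r f (lkp r T) u"
definition tabt :: "nat \<Rightarrow> (nat \<Rightarrow> nat) \<Rightarrow> nat \<Rightarrow> nat \<Rightarrow> nat" where
  "tabt r f K t = rec_nat 0 (\<lambda>n T. \<Sum>z<2 ^ K. pstep r f T z * r ^ z) t"
definition col :: "nat \<Rightarrow> (nat \<Rightarrow> nat) \<Rightarrow> nat \<Rightarrow> nat" where
  "col r f x = (\<Sum>m<x. bt x m * lkp r (tabt r f (Suc x) (Suc x)) (tr x m)) mod r"

lemma PR_bt [prI]: "PR k A \<Longrightarrow> PR k B1 \<Longrightarrow> PR k (\<lambda>f xs. bt (A f xs) (B1 f xs))"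
  unfolding bt_def by (intro prI)
lemma PR_tr [prI]: "PR k A \<Longrightarrow> PR k B1 \<Longrightarrow> PR k (\<lambda>f xs. tr (A f xs) (B1 f xs))"
  unfolding tr_def by (intro prI)
lemma PR_lkp [prI]: "PR k A \<Longrightarrow> PR k B1 \<Longrightarrow> PR k (\<lambda>f xs. lkp r (A f xs) (B1 f xs))"
  unfolding lkp_def by (intro prI)
lemma PR_pe [prI]: "PR k A \<Longrightarrow> PR k B1 \<Longrightarrow> PR k (\<lambda>f xs. pe (A f xs) (B1 f xs))"
  unfolding pe_def by (intro prI)

lemma PR_lsb [prI]: "PR k A \<Longrightarrow> PR k (\<lambda>f xs. lsb (A f xs))"
proof -
  have "PR 1 (\<lambda>f xs. lsb (xs ! 0))"
    unfolding lsb_def by (intro prI | simp)+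
  moreover assume "PR k A"
  ultimately show ?thesis by (rule PR_cong[OF PR_comp1]) auto
qed

lemma PR_msb [prI]: "PR k A \<Longrightarrow> PR k (\<lambda>f xs. msb (A f xs))"
proof -
  have "PR 1 (\<lambda>f xs. msb (xs ! 0))"
    unfolding msb_def by (intro prI | simp)+
  moreover assume "PR k A"
  ultimately show ?thesis by (rule PR_cong[OF PR_comp1]) auto
qed

lemma PR_qry [prI]: "PR k A \<Longrightarrow> PR k (\<lambda>f xs. qry f (A f xs))"
  unfolding qry_def by (intro prI)

lemma PR_yv [prI]: "PR k A \<Longrightarrow> PR k (\<lambda>f xs. yv f (A f xs))"
  unfolding yv_def by (intro prI)

lemma PR_pstep [prI]: "PR k A \<Longrightarrow> PR k B1 \<Longrightarrow> PR k (\<lambda>f xs. pstep r f (A f xs) (B1 f xs))"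
proof -
  have "PR 2 (\<lambda>f xs. pstep r f (xs ! 0) (xs ! 1))"
    unfolding pstep_def pstepD_def by (intro prI | simp)+
  moreover assume "PR k A" "PR k B1"
  ultimately show ?thesis by (rule PR_cong[OF PR_comp2]) auto
qed

lemma PR_tabt [prI]: "PR k A \<Longrightarrow> PR k B1 \<Longrightarrow> PR k (\<lambda>f xs. tabt r f (A f xs) (B1 f xs))"
proof -
  have "PR 2 (\<lambda>f xs. tabt r f (xs ! 0) (xs ! 1))"
    unfolding tabt_def by (intro prI PR_rec | simp)+
  moreover assume "PR k A" "PR k B1"
  ultimately show ?thesis by (rule PR_cong[OF PR_comp2]) auto
qed

lemma PR_col: "PR 1 (\<lambda>f xs. col r f (xs ! 0))"
  unfolding col_def by (intro prI | simp)+

lemma col_computable: "\<exists>e. \<forall>f. computes f e (col r f)"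
proof -
  obtain e where e: "\<forall>f xs. length xs = 1 \<longrightarrow> eval f e xs (col r f (xs ! 0))"
    using PR_col[of r] unfolding PR_def by blast
  show ?thesis
    by (rule exI[of _ e]) (auto simp: computes_def intro: e[rule_format, of "[_]", simplified])
qed


lemma sum_count': "(\<Sum>q<a. if P q then 1 else (0::nat)) = (\<Sum>q<a. if q < d then 1 else 0)
   \<Longrightarrow> d \<le> a \<Longrightarrow> (\<Sum>q<a. if P q then 1 else (0::nat)) = d"
  by (simp add: sum_count)

lemma low_exists: "(u::nat) > 0 \<Longrightarrow> \<exists>n. 2 ^ n dvd u \<and> \<not> 2 ^ Suc n dvd u"
proof -
  assume u: "u > 0"
  have ex: "\<not> 2 ^ Suc u dvd u"
  proof
    assume "2 ^ Suc u dvd u"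
    then have "2 ^ Suc u \<le> u" using u by (rule dvd_imp_le)
    moreover have "u < 2 ^ Suc u" using less_exp[of "Suc u"] by simp
    ultimately show False by simp
  qed
  define n where "n = (LEAST n. \<not> 2 ^ Suc n dvd u)"
  have 1: "\<not> 2 ^ Suc n dvd u" unfolding n_def by (rule LeastI[of _ u]) (rule ex)
  have 2: "2 ^ n dvd u"
  proof (cases n)
    case 0 then show ?thesis by simp
  next
    case (Suc m)
    then have "m < n" by simp
    then have "\<not> \<not> 2 ^ Suc m dvd u" unfolding n_def by (rule not_less_Least)
    then show ?thesis using Suc by simp
  qed
  show ?thesis using 1 2 by blast
qed

lemma top_exists: "(u::nat) > 0 \<Longrightarrow> \<exists>s. 2 ^ s \<le> u \<and> u < 2 ^ Suc s"
proof -
  assume u: "u > 0"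
  have ex: "u < 2 ^ Suc u" using less_exp[of "Suc u"] by simp
  define s where "s = (LEAST s. u < 2 ^ Suc s)"
  have 1: "u < 2 ^ Suc s" unfolding s_def by (rule LeastI[of _ u]) (rule ex)
  have 2: "2 ^ s \<le> u"
  proof (cases s)
    case 0 then show ?thesis using u by simp
  next
    case (Suc m)
    then have "m < s" by simp
    then have "\<not> u < 2 ^ Suc m" unfolding s_def by (rule not_less_Least)
    then show ?thesis using Suc by simp
  qed
  show ?thesis using 1 2 by blast
qed

lemma lsb_char:
  assumes u: "u > 0" and d: "2 ^ n dvd u" and nd: "\<not> 2 ^ Suc n dvd u"
  shows "lsb u = n"
proof -
  have iff: "u mod 2 ^ Suc m = 0 \<longleftrightarrow> m < n" for m
  proof
    assume "u mod 2 ^ Suc m = 0"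
    then have "2 ^ Suc m dvd u" by (simp add: dvd_eq_mod_eq_0)
    show "m < n"
    proof (rule ccontr)
      assume "\<not> m < n"
      then have "(2::nat) ^ Suc n dvd 2 ^ Suc m" by (simp add: le_imp_power_dvd)
      with \<open>2 ^ Suc m dvd u\<close> nd show False using dvd_trans by blast
    qed
  next
    assume "m < n"
    then have "(2::nat) ^ Suc m dvd 2 ^ n" by (intro le_imp_power_dvd) simp
    with d have "2 ^ Suc m dvd u" using dvd_trans by blast
    then show "u mod 2 ^ Suc m = 0" by (simp add: dvd_eq_mod_eq_0)
  qed
  have "n < u"
    using less_le_trans[OF less_exp dvd_imp_le[OF d u]] .
  have "lsb u = (\<Sum>m<u. if m < n then 1 else 0)"
    unfolding lsb_def by (rule sum.cong) (simp_all only: iff)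
  also have "\<dots> = n" using \<open>n < u\<close> by (simp add: sum_count)
  finally show ?thesis .
qed

lemma msb_char:
  assumes "2 ^ s \<le> u" "u < 2 ^ Suc s"
  shows "msb u = s"
proof -
  have iff: "2 ^ Suc m \<le> u \<longleftrightarrow> m < s" for m
  proof
    assume "2 ^ Suc m \<le> u"
    then have "2 ^ Suc m < (2::nat) ^ Suc s" using assms(2) by (rule le_less_trans)
    then have "Suc m < Suc s" by (rule power_less_imp_less_exp[rotated]) simp
    then show "m < s" by simp
  next
    assume "m < s"
    then have "2 ^ Suc m \<le> (2::nat) ^ s" by (intro power_increasing) simp_all
    then show "2 ^ Suc m \<le> u" using assms(1) by simp
  qed
  have "s < u" using less_le_trans[OF less_exp assms(1)] .
  have "msb u = (\<Sum>m<u. if m < s then 1 else 0)"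
    unfolding msb_def by (rule sum.cong) (simp_all only: iff)
  also have "\<dots> = s" using \<open>s < u\<close> by (simp add: sum_count)
  finally show ?thesis .
qed

lemma bits_bound: "n \<in> bits u \<Longrightarrow> n < u"
proof (rule ccontr)
  assume "n \<in> bits u" "\<not> n < u"
  then have "u \<le> n" by simp
  then have "(2::nat) ^ u \<le> 2 ^ n" by (rule power_increasing) simp
  then have "u < 2 ^ n" by (rule less_le_trans[OF less_exp])
  then have "u div 2 ^ n = 0" by simp
  with \<open>n \<in> bits u\<close> show False by (simp add: bits_def)
qed

lemma finite_bits: "finite (bits u)"
  by (rule finite_subset[of _ "{..<u}"]) (auto dest: bits_bound)

lemma even_div_below:
  assumes "2 ^ n dvd (u::nat)" "m < n"
  shows "even (u div 2 ^ m)"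
proof -
  obtain a where a: "u = 2 ^ n * a" using assms(1) by blast
  have "(2::nat) ^ n = 2 ^ m * 2 ^ (n - m)" using assms(2) by (simp flip: power_add)
  then have "u div 2 ^ m = 2 ^ (n - m) * a" using a by simp
  moreover have "n - m > 0" using assms(2) by simp
  ultimately show ?thesis by simp
qed

lemma odd_div_at:
  assumes "2 ^ n dvd (u::nat)" "\<not> 2 ^ Suc n dvd u"
  shows "odd (u div 2 ^ n)"
proof
  assume "even (u div 2 ^ n)"
  then obtain b where "u div 2 ^ n = 2 * b" by blast
  then have "u = 2 ^ Suc n * b" using assms(1) by (metis dvd_div_mult_self mult.assoc mult.commute power_Suc)
  with assms(2) show False by simp
qed

lemma lam_char:
  assumes u: "u > 0" and d: "2 ^ n dvd u" and nd: "\<not> 2 ^ Suc n dvd u"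
  shows "lam u = n"
  unfolding lam_def
proof (rule Min_eqI[OF finite_bits])
  show "n \<in> bits u" using odd_div_at[OF d nd] by (simp add: bits_def)
  fix m assume "m \<in> bits u"
  then show "n \<le> m" using even_div_below[OF d, of m] by (force simp: bits_def)
qed

lemma mu_char:
  assumes "2 ^ s \<le> u" "u < 2 ^ Suc s"
  shows "mu u = s"
  unfolding mu_def
proof (rule Max_eqI[OF finite_bits])
  have "1 \<le> u div 2 ^ s" using assms(1) by (simp add: less_eq_div_iff_mult_less_eq)
  moreover have "u div 2 ^ s < 2" using assms(2) by (simp add: div_less_iff_less_mult)
  ultimately have "u div 2 ^ s = 1" by simp
  then show "s \<in> bits u" by (simp add: bits_def)
  fix m assume "m \<in> bits u"
  show "m \<le> s"
  proof (rule ccontr)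
    assume "\<not> m \<le> s"
    then have "(2::nat) ^ Suc s \<le> 2 ^ m" by (intro power_increasing) simp_all
    then have "u div 2 ^ m = 0" using assms(2) by simp
    with \<open>m \<in> bits u\<close> show False by (simp add: bits_def)
  qed
qed

lemma lam_props: "u > 0 \<Longrightarrow> 2 ^ lam u dvd u \<and> \<not> 2 ^ Suc (lam u) dvd u \<and> lsb u = lam u"
  using low_exists[of u] lam_char lsb_char by metis

lemma mu_props: "u > 0 \<Longrightarrow> 2 ^ mu u \<le> u \<and> u < 2 ^ Suc (mu u) \<and> msb u = mu u"
  using top_exists[of u] mu_char msb_char by metis


lemma div_hi:
  assumes "2 ^ Suc n dvd (w::nat)" "v < 2 ^ Suc n" "Suc n \<le> m"
  shows "(w + v) div 2 ^ m = w div 2 ^ m"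
proof -
  obtain a where a: "w = 2 ^ Suc n * a" using assms(1) by blast
  have p: "(2::nat) ^ m = 2 ^ Suc n * 2 ^ (m - Suc n)" by (metis assms(3) le_add_diff_inverse power_add)
  have "(w + v) div 2 ^ Suc n = a" using a assms(2) by simp
  moreover have "w div 2 ^ Suc n = a" using a by simp
  ultimately show ?thesis unfolding p div_mult2_eq by simp
qed

lemma div_lo:
  assumes "2 ^ Suc n dvd (w::nat)" "m \<le> n"
  shows "(w + v) div 2 ^ m = w div 2 ^ m + v div 2 ^ m" "even (w div 2 ^ m)" "2 ^ m dvd w"
proof -
  have "(2::nat) ^ m dvd 2 ^ Suc n" using assms(2) by (intro le_imp_power_dvd) simp
  then show "2 ^ m dvd w" using assms(1) dvd_trans by blast
  then show "(w + v) div 2 ^ m = w div 2 ^ m + v div 2 ^ m" by (rule div_plus_div_distrib_dvd_left)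
  show "even (w div 2 ^ m)" using even_div_below[OF assms(1)] assms(2) by simp
qed

lemma bt_hi: "2 ^ Suc n dvd (w::nat) \<Longrightarrow> v < 2 ^ Suc n \<Longrightarrow> Suc n \<le> m \<Longrightarrow> bt (w + v) m = bt w m"
  unfolding bt_def by (simp only: div_hi)
lemma tr_hi: "2 ^ Suc n dvd (w::nat) \<Longrightarrow> v < 2 ^ Suc n \<Longrightarrow> Suc n \<le> m \<Longrightarrow> tr (w + v) m = tr w m"
  unfolding tr_def by (simp only: div_hi)
lemma bt_lo: "2 ^ Suc n dvd (w::nat) \<Longrightarrow> m \<le> n \<Longrightarrow> bt (w + v) m = bt v m"
  unfolding bt_def using div_lo(1)[of n w m v] div_lo(2)[of n w m] by (auto elim!: evenE)
lemma bt_w_lo: "2 ^ Suc n dvd (w::nat) \<Longrightarrow> m \<le> n \<Longrightarrow> bt w m = 0"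
  unfolding bt_def using div_lo(2)[of n w m] by simp
lemma tr_lo: "2 ^ Suc n dvd (w::nat) \<Longrightarrow> m \<le> n \<Longrightarrow> tr (w + v) m = w + tr v m"
  unfolding tr_def using div_lo(1)[of n w m v] div_lo(3)[of n w m] by (simp add: algebra_simps)

lemma v_top:
  assumes "2 ^ n \<le> (v::nat)" "v < 2 ^ Suc n"
  shows "bt v n = 1" "tr v n = 2 ^ n"
proof -
  have "1 \<le> v div 2 ^ n" using assms(1) by (simp add: less_eq_div_iff_mult_less_eq)
  moreover have "v div 2 ^ n < 2" using assms(2) by (simp add: div_less_iff_less_mult)
  ultimately have "v div 2 ^ n = 1" by simp
  then show "bt v n = 1" "tr v n = 2 ^ n" by (simp_all add: bt_def tr_def)
qed

lemma bt_big: "(x::nat) < 2 ^ m \<Longrightarrow> bt x m = 0"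
  by (simp add: bt_def)

lemma bt_ge: "(x::nat) \<le> m \<Longrightarrow> bt x m = 0"
proof -
  assume "x \<le> m"
  have "x < 2 ^ x" by (rule less_exp)
  also have "(2::nat) ^ x \<le> 2 ^ m" using \<open>x \<le> m\<close> by (rule power_increasing) simp
  finally show ?thesis by (rule bt_big)
qed

lemma bt01: "bt y m \<noteq> 0 \<Longrightarrow> bt y m = 1"
  by (simp add: bt_def)

lemma tr_le: "tr y m \<le> y"
  unfolding tr_def by (simp add: div_times_less_eq_dividend)

lemma lsb_tr:
  assumes "bt y m = 1"
  shows "lsb (tr y m) = m" "tr y m > 0"
proof -
  have odd: "odd (y div 2 ^ m)" using assms by (simp add: bt_def odd_iff_mod_2_eq_one)
  then have pos: "y div 2 ^ m > 0" by (rule odd_pos)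
  show "tr y m > 0" unfolding tr_def using pos by simp
  have "\<not> 2 ^ Suc m dvd tr y m"
  proof
    assume "2 ^ Suc m dvd tr y m"
    then obtain b where "y div 2 ^ m * 2 ^ m = 2 ^ Suc m * b" unfolding tr_def by blast
    then have "y div 2 ^ m = 2 * b" by (simp add: mult.commute)
    with odd show False by simp
  qed
  then show "lsb (tr y m) = m"
    using \<open>tr y m > 0\<close> by (intro lsb_char) (simp_all add: tr_def)
qed

lemma digits_bound:
  assumes "\<And>z. a z < (r::nat)"
  shows "(\<Sum>z<N. a z * r ^ z) < r ^ N"
proof (induction N)
  case 0 then show ?case by simp
next
  case (Suc N)
  have "(\<Sum>z<Suc N. a z * r ^ z) = (\<Sum>z<N. a z * r ^ z) + a N * r ^ N" by simp
  also have "\<dots> < r ^ N + a N * r ^ N" using Suc by simp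
  also have "\<dots> = Suc (a N) * r ^ N" by simp
  also have "\<dots> \<le> r * r ^ N" using assms[of N] by (intro mult_right_mono) simp_all
  finally show ?case by simp
qed

lemma digits:
  assumes "\<And>z. a z < (r::nat)" "z0 < N"
  shows "(\<Sum>z<N. a z * r ^ z) div r ^ z0 mod r = a z0"
  using assms(2)
proof (induction N)
  case 0 then show ?case by simp
next
  case (Suc N)
  have r0: "r > 0" using assms(1)[of 0] by simp
  let ?S = "\<Sum>z<N. a z * r ^ z"
  have eq: "(\<Sum>z<Suc N. a z * r ^ z) = ?S + a N * r ^ N" by simp
  show ?case
  proof (cases "z0 = N")
    case True
    have "?S div r ^ N = 0" using digits_bound[of a r N, OF assms(1)] by simp
    then have "(?S + a N * r ^ N) div r ^ N = a N" using r0 by simp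
    then show ?thesis using True eq assms(1)[of N] by simp
  next
    case False
    then have lt: "z0 < N" using Suc.prems by simp
    have p: "r ^ N = r ^ z0 * r ^ (N - z0)" using lt by (simp flip: power_add)
    have "(?S + a N * r ^ N) div r ^ z0 = ?S div r ^ z0 + a N * r ^ (N - z0)"
      unfolding p using r0 by (simp add: mult.left_commute[of "a N"])
    moreover have "r dvd r ^ (N - z0)" using lt by (simp add: dvd_power)
    ultimately have "(?S + a N * r ^ N) div r ^ z0 mod r = ?S div r ^ z0 mod r"
      by (auto simp: mod_add_right_eq[symmetric] elim!: dvdE)
    then show ?thesis using eq Suc.IH[OF lt] by simp
  qed
qed


fun Dfun :: "nat \<Rightarrow> (nat \<Rightarrow> nat) \<Rightarrow> nat \<Rightarrow> nat \<Rightarrow> nat" where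
  "Dfun r f 0 = (\<lambda>z. 0)"
| "Dfun r f (Suc t) = pstepD r f (Dfun r f t)"

lemma pstepD_cong:
  assumes "u - 2 ^ lsb u \<noteq> 0 \<Longrightarrow> qry f u \<noteq> 0 \<Longrightarrow>
     \<forall>m<lsb u. bt (yv f u) m \<noteq> 0 \<longrightarrow> D1 (tr (yv f u) m) = D2 (tr (yv f u) m)"
  shows "pstepD r f D1 u = pstepD r f D2 u"
proof (cases "u - 2 ^ lsb u = 0 \<or> qry f u = 0")
  case True then show ?thesis by (simp add: pstepD_def)
next
  case False
  then have h: "\<forall>m<lsb u. bt (yv f u) m \<noteq> 0 \<longrightarrow> D1 (tr (yv f u) m) = D2 (tr (yv f u) m)"
    using assms by blast
  have "(\<Sum>m<lsb u. bt (yv f u) m * D1 (tr (yv f u) m)) = (\<Sum>m<lsb u. bt (yv f u) m * D2 (tr (yv f u) m))"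
    by (rule sum.cong) (use h in auto)
  then show ?thesis by (simp add: pstepD_def)
qed

lemma pstepD_less: "r > 0 \<Longrightarrow> pstepD r f D u < r"
  by (simp add: pstepD_def)

lemma D_stable: "lsb z < t1 \<Longrightarrow> lsb z < t2 \<Longrightarrow> Dfun r f t1 z = Dfun r f t2 z"
proof (induction "lsb z" arbitrary: z t1 t2 rule: less_induct)
  case less
  obtain a where a: "t1 = Suc a" using less.prems(1) by (cases t1) auto
  obtain b where b: "t2 = Suc b" using less.prems(2) by (cases t2) auto
  have "pstepD r f (Dfun r f a) z = pstepD r f (Dfun r f b) z"
  proof (rule pstepD_cong, intro allI impI)
    fix m assume m: "m < lsb z" "bt (yv f z) m \<noteq> 0"
    have "bt (yv f z) m = 1" by (rule bt01[OF m(2)])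
    then have l: "lsb (tr (yv f z) m) = m" by (rule lsb_tr)
    show "Dfun r f a (tr (yv f z) m) = Dfun r f b (tr (yv f z) m)"
      by (rule less.hyps) (use l m a b less.prems in auto)
  qed
  then show ?case using a b by simp
qed

definition good :: "(nat \<Rightarrow> nat) \<Rightarrow> bool" where
  "good f \<longleftrightarrow> (\<forall>n a. f (pe n a) \<noteq> 0 \<longrightarrow> f (pe n a) - 1 < 2 ^ Suc n)"

lemma dvd_step: "(d::nat) dvd a \<Longrightarrow> d dvd b \<Longrightarrow> a < b \<Longrightarrow> a + d \<le> b"
proof -
  assume "d dvd a" "d dvd b" "a < b"
  then obtain i j where "a = d * i" "b = d * j" by (auto elim!: dvdE)
  with \<open>a < b\<close> have "i < j" by simp
  then have "d * Suc i \<le> d * j" by (intro mult_le_mono2) simp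
  then show ?thesis using \<open>a = d * i\<close> \<open>b = d * j\<close> by simp
qed

lemma yv_bound:
  assumes g: "good f" and z: "z < 2 ^ K" and nz: "z - 2 ^ lsb z \<noteq> 0" and q: "qry f z \<noteq> 0"
  shows "yv f z < 2 ^ K"
proof -
  have zp: "z > 0" using nz by auto
  define n where "n = lsb z"
  have d: "2 ^ n dvd z" and nd: "\<not> 2 ^ Suc n dvd z" using lam_props[OF zp] n_def by auto
  have o: "odd (z div 2 ^ n)" by (rule odd_div_at[OF d nd])
  then obtain c where c: "z div 2 ^ n = 2 * c + 1" by (metis oddE)
  have zeq: "z = 2 ^ n * (2 * c + 1)" using c d by (metis dvd_div_mult_self mult.commute)
  then have "z - 2 ^ n = 2 ^ Suc n * c" by (simp add: algebra_simps)
  then have d1: "2 ^ Suc n dvd (z - 2 ^ n)" by simp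
  have "2 ^ n \<le> z" using dvd_imp_le[OF d zp] .
  then have "(2::nat) ^ n < 2 ^ K" using z by (rule le_less_trans)
  then have "n < K" by (rule power_less_imp_less_exp[rotated]) simp
  then have d2: "(2::nat) ^ Suc n dvd 2 ^ K" by (intro le_imp_power_dvd) simp
  have "z - 2 ^ n < 2 ^ K" using z by simp
  then have le: "z - 2 ^ n + 2 ^ Suc n \<le> 2 ^ K" by (rule dvd_step[OF d1 d2])
  have "qry f z - 1 < 2 ^ Suc n" using g q unfolding good_def qry_def n_def by blast
  then show ?thesis unfolding yv_def n_def[symmetric] using le by simp
qed

lemma tab_correct:
  assumes g: "good f" and r: "r > 0"
  shows "z < 2 ^ K \<Longrightarrow> lkp r (tabt r f K t) z = Dfun r f t z"
proof (induction t arbitrary: z)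
  case 0 then show ?case by (simp add: tabt_def lkp_def)
next
  case (Suc t)
  have "lkp r (tabt r f K (Suc t)) z = lkp r (\<Sum>z<2 ^ K. pstep r f (tabt r f K t) z * r ^ z) z"
    by (simp add: tabt_def)
  also have "\<dots> = pstep r f (tabt r f K t) z"
    unfolding lkp_def by (rule digits) (use Suc.prems r in \<open>simp_all add: pstep_def pstepD_less\<close>)
  also have "\<dots> = pstepD r f (Dfun r f t) z"
    unfolding pstep_def
  proof (rule pstepD_cong, intro allI impI)
    fix m assume "z - 2 ^ lsb z \<noteq> 0" "qry f z \<noteq> 0"
    then have "yv f z < 2 ^ K" using yv_bound[OF g Suc.prems] by blast
    then have "tr (yv f z) m < 2 ^ K" using tr_le[of "yv f z" m] by linarith
    then show "lkp r (tabt r f K t) (tr (yv f z) m) = Dfun r f t (tr (yv f z) m)" by (rule Suc.IH)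
  qed
  finally show ?case by simp
qed


definition delta :: "nat \<Rightarrow> (nat \<Rightarrow> nat) \<Rightarrow> nat \<Rightarrow> nat" where
  "delta r f z = Dfun r f (Suc (lsb z)) z"

definition CC :: "nat \<Rightarrow> (nat \<Rightarrow> nat) \<Rightarrow> nat \<Rightarrow> nat \<Rightarrow> nat" where
  "CC r f N x = (\<Sum>m<N. bt x m * delta r f (tr x m))"

lemma col_eq:
  assumes g: "good f" and r: "r > 0"
  shows "col r f x = CC r f x x mod r"
proof -
  have "(\<Sum>m<x. bt x m * lkp r (tabt r f (Suc x) (Suc x)) (tr x m)) = CC r f x x"
    unfolding CC_def
  proof (rule sum.cong)
    fix m assume "m \<in> {..<x}"
    then have mx: "m < x" by simp
    have e1: "x < 2 ^ x" by (rule less_exp)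
    have e2: "(2::nat) ^ x \<le> 2 ^ Suc x" by simp
    have "tr x m < 2 ^ Suc x"
      using tr_le[of x m] e1 e2 by linarith
    then have t: "lkp r (tabt r f (Suc x) (Suc x)) (tr x m) = Dfun r f (Suc x) (tr x m)"
      by (rule tab_correct[OF g r])
    show "bt x m * lkp r (tabt r f (Suc x) (Suc x)) (tr x m) = bt x m * delta r f (tr x m)"
    proof (cases "bt x m = 0")
      case False
      then have "bt x m = 1" by (rule bt01)
      then have "lsb (tr x m) = m" by (rule lsb_tr)
      then have "Dfun r f (Suc x) (tr x m) = delta r f (tr x m)"
        unfolding delta_def using mx by (intro D_stable) simp_all
      then show ?thesis using t by simp
    qed simp
  qed simp
  then show ?thesis by (simp add: col_def)
qed

lemma sum_zero_tail:
  fixes x N :: nat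
  assumes "\<And>m. x \<le> m \<Longrightarrow> g m = (0::nat)" "x \<le> N"
  shows "(\<Sum>m<N. g m) = (\<Sum>m<x. g m)"
proof -
  have "(\<Sum>m<N. g m) = (\<Sum>m\<in>{0..<x}. g m) + (\<Sum>m\<in>{x..<N}. g m)"
    unfolding lessThan_atLeast0 using assms(2) sum.atLeastLessThan_concat[of 0 x N g] by simp
  also have "(\<Sum>m\<in>{x..<N}. g m) = 0" using assms(1) by simp
  finally show ?thesis by (simp add: lessThan_atLeast0)
qed

lemma CC_ext: "x \<le> N \<Longrightarrow> CC r f N x = CC r f x x"
  unfolding CC_def by (rule sum_zero_tail) (simp_all add: bt_ge)

lemma sum_split3:
  assumes "n < (N::nat)"
  shows "(\<Sum>m<N. g m) = (\<Sum>m<n. g m) + g n + (\<Sum>m\<in>{Suc n..<N}. g m)"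
proof -
  have "(\<Sum>m<N. g m) = (\<Sum>m\<in>{0..<Suc n}. g m) + (\<Sum>m\<in>{Suc n..<N}. g m)"
    unfolding lessThan_atLeast0 using assms sum.atLeastLessThan_concat[of 0 "Suc n" N g] by simp
  also have "(\<Sum>m\<in>{0..<Suc n}. g m) = (\<Sum>m<n. g m) + g n"
    by (simp add: lessThan_atLeast0)
  finally show ?thesis .
qed

lemma pe_eq: "pe a b = prod_encode (a, b)"
  by (simp add: pe_def prod_encode_def triangle_def)

lemma mod_arith:
  assumes "r > (0::nat)"
  shows "(S + (r + 1 - S mod r) mod r + Cw) mod r = (Cw + 1) mod r"
proof -
  define X where "X = r + 1 - S mod r"
  have lt: "S mod r < r" using assms by simp
  have "S + X = S div r * r + S mod r + (r + 1 - S mod r)" unfolding X_def by simp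
  also have "\<dots> = S div r * r + r + 1" using lt by linarith
  also have "\<dots> = (S div r + 1) * r + 1" by (simp add: algebra_simps)
  finally have eq: "S + X = (S div r + 1) * r + 1" .
  have "(S + X mod r + Cw) mod r = ((S + Cw) + X mod r) mod r" by (simp add: algebra_simps)
  also have "\<dots> = ((S + Cw) + X) mod r" by (rule mod_add_right_eq)
  also have "(S + Cw) + X = (S div r + 1) * r + (Cw + 1)" using eq by simp
  also have "((S div r + 1) * r + (Cw + 1)) mod r = (Cw + 1) mod r" by (rule mod_mult_self3)
  finally show ?thesis unfolding X_def .
qed

lemma main_step:
  assumes g: "good f" and r: "r > 0" and w: "w > 0" and n: "n < lam w"
    and fq: "f (pe n (pe (lam w) (mu w))) = Suc v"
    and v1: "2 ^ n \<le> v" and v2: "v < 2 ^ Suc n"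
  shows "col r f (w + v) = (col r f w + 1) mod r"
proof -
  define y where "y = w + v"
  define u where "u = w + 2 ^ n"
  obtain lw: "2 ^ lam w dvd w" "lsb w = lam w" using lam_props[OF w] by blast
  obtain mw: "2 ^ mu w \<le> w" "w < 2 ^ Suc (mu w)" using mu_props[OF w] by blast
  have "(2::nat) ^ Suc n dvd 2 ^ lam w" using n by (intro le_imp_power_dvd) simp
  then have dw: "2 ^ Suc n dvd w" using lw(1) dvd_trans by blast
  have d2: "2 ^ n dvd w" using dw by (metis dvd_mult_right power_Suc)
  have up: "u > 0" unfolding u_def using w by simp
  have lu: "lsb u = n"
  proof (rule lsb_char[OF up])
    show "2 ^ n dvd u" unfolding u_def using d2 by simp
    show "\<not> 2 ^ Suc n dvd u"
    proof
      assume "2 ^ Suc n dvd u"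
      then have "2 ^ Suc n dvd (2::nat) ^ n" unfolding u_def using dw by (simp add: dvd_add_right_iff)
      then show False by (simp add: nat_dvd_not_less)
    qed
  qed
  have "2 ^ Suc n \<le> w" using dvd_imp_le[OF dw w] .
  then have "(2::nat) ^ Suc n < 2 ^ Suc (mu w)" using mw(2) by (rule le_less_trans)
  then have "Suc n < Suc (mu w)" by (rule power_less_imp_less_exp[rotated]) simp
  then have "(2::nat) ^ Suc n dvd 2 ^ Suc (mu w)" by (intro le_imp_power_dvd) simp
  then have "w + 2 ^ Suc n \<le> 2 ^ Suc (mu w)" by (rule dvd_step[OF dw _ mw(2)])
  moreover have "(2::nat) ^ n < 2 ^ Suc n" by simp
  ultimately have "u < 2 ^ Suc (mu w)" unfolding u_def by linarith
  then have mu_u: "msb u = mu w" using mw(1) unfolding u_def by (intro msb_char) simp_all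
  have uw: "u - 2 ^ lsb u = w" unfolding lu by (simp add: u_def)
  have uw': "u - 2 ^ n = w" using uw lu by simp
  have qu: "qry f u = Suc v" unfolding qry_def lu uw' mu_u lw(2) using fq .
  have yu: "yv f u = y" unfolding yv_def lu uw' qu y_def by simp
  define S where "S = (\<Sum>m<n. bt y m * delta r f (tr y m))"
  have "(\<Sum>m<n. bt y m * Dfun r f n (tr y m)) = S"
    unfolding S_def
  proof (rule sum.cong)
    fix m assume "m \<in> {..<n}"
    then have mn: "m < n" by simp
    show "bt y m * Dfun r f n (tr y m) = bt y m * delta r f (tr y m)"
    proof (cases "bt y m = 0")
      case False
      then have "bt y m = 1" by (rule bt01)
      then have l: "lsb (tr y m) = m" by (rule lsb_tr)
      have "Dfun r f n (tr y m) = Dfun r f (Suc (lsb (tr y m))) (tr y m)"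
        by (rule D_stable) (use l mn in simp_all)
      then show ?thesis unfolding delta_def by simp
    qed simp
  qed simp
  then have du: "delta r f u = (r + 1 - S mod r) mod r"
    unfolding delta_def lu using uw qu yu w by (simp add: pstepD_def lu)
  have "n < 2 ^ n" by (rule less_exp)
  then have ny: "n < y" unfolding y_def using v1 by linarith
  have wy: "w \<le> y" unfolding y_def by simp
  have gn: "bt y n * delta r f (tr y n) = delta r f u"
    unfolding y_def u_def using bt_lo[OF dw, of n v] tr_lo[OF dw, of n v] v_top[OF v1 v2] by simp
  have hi: "(\<Sum>m\<in>{Suc n..<y}. bt y m * delta r f (tr y m)) = (\<Sum>m\<in>{Suc n..<y}. bt w m * delta r f (tr w m))"
    unfolding y_def by (rule sum.cong) (simp_all add: bt_hi[OF dw v2] tr_hi[OF dw v2])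
  have Cy: "CC r f y y = S + delta r f u + (\<Sum>m\<in>{Suc n..<y}. bt w m * delta r f (tr w m))"
    unfolding CC_def sum_split3[OF ny] S_def gn hi ..
  have "CC r f w w = CC r f y w" using CC_ext[OF wy] by simp
  also have "\<dots> = (\<Sum>m<n. bt w m * delta r f (tr w m)) + bt w n * delta r f (tr w n)
      + (\<Sum>m\<in>{Suc n..<y}. bt w m * delta r f (tr w m))"
    unfolding CC_def by (rule sum_split3[OF ny])
  also have "\<dots> = (\<Sum>m\<in>{Suc n..<y}. bt w m * delta r f (tr w m))"
    using bt_w_lo[OF dw] by simp
  finally have Cw: "CC r f w w = (\<Sum>m\<in>{Suc n..<y}. bt w m * delta r f (tr w m))" .
  show ?thesis
    unfolding col_eq[OF g r] y_def[symmetric] Cy Cw du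
    using mod_arith[OF r] by (simp add: mod_Suc_eq)
qed


theorem corollary3p2:
  fixes r :: nat
  assumes "r > 1"
  shows "\<exists>e. \<forall>Q :: nat \<Rightarrow> nat \<Rightarrow> nat \<Rightarrow> nat option.
           recursive_set3 {(n, k, s). Q n k s \<noteq> None}
         \<and> (\<forall>n k s v. Q n k s = Some v \<longrightarrow> v \<in> B n)
         \<longrightarrow> (\<exists>c. computes (oracle_of Q) e c \<and> (\<forall>x. c x < r)
               \<and> (\<forall>w > 0. \<forall>n < lam w. \<forall>v. Q n (lam w) (mu w) = Some v
                     \<longrightarrow> c (w + v) mod r = (c w + 1) mod r))"
proof -
  have r0: "r > 0" using assms by simp
  obtain e where e: "\<forall>f. computes f e (col r f)" using col_computable[of r] by blast
  show ?thesis
  proof (rule exI[of _ e], intro allI impI)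
    fix Q :: "nat \<Rightarrow> nat \<Rightarrow> nat \<Rightarrow> nat option"
    assume hyp: "recursive_set3 {(n, k, s). Q n k s \<noteq> None} \<and> (\<forall>n k s v. Q n k s = Some v \<longrightarrow> v \<in> B n)"
    then have QB: "\<And>n k s v. Q n k s = Some v \<Longrightarrow> v \<in> B n" by blast
    have Bb: "2 ^ n \<le> v \<and> v < 2 ^ Suc n" if "v \<in> B n" for v n
      using that mu_props[of v] by (auto simp: B_def)
    let ?f = "oracle_of Q"
    have fq: "?f (pe n (pe k s)) = (case Q n k s of None \<Rightarrow> 0 | Some v \<Rightarrow> Suc v)" for n k s
      by (simp add: pe_eq oracle_of_def)
    have g: "good ?f"
      unfolding good_def
    proof (intro allI impI)
      fix n a assume nz: "?f (pe n a) \<noteq> 0"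
      obtain k s where a: "a = pe k s" by (metis pe_eq prod_decode_inverse surj_pair)
      show "?f (pe n a) - 1 < 2 ^ Suc n"
      proof (cases "Q n k s")
        case None then show ?thesis using nz a fq by simp
      next
        case (Some v)
        then show ?thesis using a fq Bb[OF QB[OF Some]] by simp
      qed
    qed
    show "\<exists>c. computes ?f e c \<and> (\<forall>x. c x < r) \<and>
          (\<forall>w > 0. \<forall>n < lam w. \<forall>v. Q n (lam w) (mu w) = Some v
                     \<longrightarrow> c (w + v) mod r = (c w + 1) mod r)"
    proof (intro exI[of _ "col r ?f"] conjI allI impI)
      show "computes ?f e (col r ?f)" using e by blast
      show "col r ?f x < r" for x using r0 by (simp add: col_def)
      fix w n v assume w: "w > 0" and n: "n < lam w" and q: "Q n (lam w) (mu w) = Some v"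
      have vb: "2 ^ n \<le> v" "v < 2 ^ Suc n" using Bb[OF QB[OF q]] by auto
      have "?f (pe n (pe (lam w) (mu w))) = Suc v" using fq q by simp
      then have "col r ?f (w + v) = (col r ?f w + 1) mod r"
        by (rule main_step[OF g r0 w n _ vb])
      then show "col r ?f (w + v) mod r = (col r ?f w + 1) mod r" by simp
    qed
  qed
qed

end
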